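(* Let $n\ge 1$ be an integer, $x\in(\frac1n,\infty)$, $y\in S^1=\mathbf{R}/2\pi\mathbf{Z}$, and $dA=\frac{1}{|x|}\,dx\,dy$. Consider the operator $$\Delta^n_{ex}=\partial_x^2+x^2\partial_y^2-\frac{1}{x}\partial_x+\frac{(n^4x^4+1)^2}{4x^2(n^4x^4-1)}$$ with domain $C^\infty_0((\frac1n,\infty)\times S^1)$. Then $\Delta^n_{ex}$ is not essentially self-adjoint in $L^2((\frac1n,\infty)\times S^1,dA)$.
   Context: The Grushin cylinder is $\mathbf{R}\times S^1$ with the (generalized) Riemannian metric $\mathrm{diag}(1,1/x^2)$; its area is $dA=\frac{1}{|x|}dx\,dy$, its Laplace–Beltrami operator is $\Delta=\partial_x^2+x^2\partial_y^2-\frac1x\partial_x$, and its Gaussian curvature is $K=-2/x^2$. For $x\ge 1/n$ it is locally isometric to the surface of revolution ("Grushin $n^2$-winded bell") $z_1=\frac{1}{n^2x}\cos(n^2y)$, $z_2=\frac{1}{n^2x}\sin(n^2y)$, $z_3=\frac1n+\frac1n\int_1^{nx}\sqrt{1-s^{-4}}\,ds$, whose mean curvature is $H_n=\frac{n^4x^4-3}{2x\sqrt{n^4x^4-1}}$. The extrinsic Laplacian is $\Delta^n_{ex}=\Delta-K+H_n^2$, which equals the displayed operator. *)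

theory Defs
  imports "HOL-Analysis.Analysis"
begin

text \<open>Points of the cylinder are represented as pairs (x,y) of reals; functions on
  S^1 = R/2piZ are 2pi-periodic in y, and integrals over S^1 are taken over y in [0,2pi).\<close>

definition Omega :: "nat \<Rightarrow> (real \<times> real) set" where
  "Omega n = {1 / real n<..} \<times> {0..<2*pi}"

definition L2 :: "nat \<Rightarrow> (real \<times> real \<Rightarrow> complex) set" where
  "L2 n = {u. u \<in> borel_measurable lborel \<and>
      (\<integral>\<^sup>+ p \<in> Omega n. ennreal ((cmod (u p))\<^sup>2 / \<bar>fst p\<bar>) \<partial>lborel) < \<infinity>}"

definition l2_inner :: "nat \<Rightarrow> (real \<times> real \<Rightarrow> complex) \<Rightarrow> (real \<times> real \<Rightarrow> complex) \<Rightarrow> complex" where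
  "l2_inner n u v = (LINT p:Omega n|lborel. u p * cnj (v p) / complex_of_real \<bar>fst p\<bar>)"

definition l2_dist2 :: "nat \<Rightarrow> (real \<times> real \<Rightarrow> complex) \<Rightarrow> (real \<times> real \<Rightarrow> complex) \<Rightarrow> ennreal" where
  "l2_dist2 n u v = (\<integral>\<^sup>+ p \<in> Omega n. ennreal ((cmod (u p - v p))\<^sup>2 / \<bar>fst p\<bar>) \<partial>lborel)"

definition pdx :: "(real \<times> real \<Rightarrow> complex) \<Rightarrow> real \<times> real \<Rightarrow> complex" where
  "pdx f = (\<lambda>p. vector_derivative (\<lambda>t. f (t, snd p)) (at (fst p)))"

definition pdy :: "(real \<times> real \<Rightarrow> complex) \<Rightarrow> real \<times> real \<Rightarrow> complex" where
  "pdy f = (\<lambda>p. vector_derivative (\<lambda>t. f (fst p, t)) (at (snd p)))"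

text \<open>iterated partial derivative along a word (True = d/dx, False = d/dy)\<close>
fun pd :: "bool list \<Rightarrow> (real \<times> real \<Rightarrow> complex) \<Rightarrow> real \<times> real \<Rightarrow> complex" where
  "pd [] f = f"
| "pd (b # ws) f = (if b then pdx (pd ws f) else pdy (pd ws f))"

definition smooth2 :: "(real \<times> real \<Rightarrow> complex) \<Rightarrow> bool" where
  "smooth2 f = (\<forall>ws p. pd ws f differentiable (at p))"

definition test_fun :: "nat \<Rightarrow> (real \<times> real \<Rightarrow> complex) \<Rightarrow> bool" where
  "test_fun n f = (smooth2 f \<and> (\<forall>x y. f (x, y + 2*pi) = f (x, y)) \<and>
      (\<exists>a b. 1 / real n < a \<and> (\<forall>x y. x \<notin> {a..b} \<longrightarrow> f (x, y) = 0)))"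

definition Vpot :: "nat \<Rightarrow> real \<Rightarrow> real" where
  "Vpot n x = ((real n)^4 * x^4 + 1)\<^sup>2 / (4 * x\<^sup>2 * ((real n)^4 * x^4 - 1))"

definition Dex :: "nat \<Rightarrow> (real \<times> real \<Rightarrow> complex) \<Rightarrow> real \<times> real \<Rightarrow> complex" where
  "Dex n f = (\<lambda>(x, y). pdx (pdx f) (x, y) + complex_of_real (x\<^sup>2) * pdy (pdy f) (x, y)
      - complex_of_real (1 / x) * pdx f (x, y) + complex_of_real (Vpot n x) * f (x, y))"

definition Dex_graph :: "nat \<Rightarrow> ((real \<times> real \<Rightarrow> complex) \<times> (real \<times> real \<Rightarrow> complex)) set" where
  "Dex_graph n = {(f, Dex n f) | f. test_fun n f}"

definition op_closure :: "nat \<Rightarrow> ((real \<times> real \<Rightarrow> complex) \<times> (real \<times> real \<Rightarrow> complex)) set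
    \<Rightarrow> ((real \<times> real \<Rightarrow> complex) \<times> (real \<times> real \<Rightarrow> complex)) set" where
  "op_closure n G = {(u, f). u \<in> L2 n \<and> f \<in> L2 n \<and>
      (\<exists>s. (\<forall>k. s k \<in> G) \<and> ((\<lambda>k. l2_dist2 n (fst (s k)) u) \<longlonglongrightarrow> 0)
                          \<and> ((\<lambda>k. l2_dist2 n (snd (s k)) f) \<longlonglongrightarrow> 0))}"

definition op_adjoint :: "nat \<Rightarrow> ((real \<times> real \<Rightarrow> complex) \<times> (real \<times> real \<Rightarrow> complex)) set
    \<Rightarrow> ((real \<times> real \<Rightarrow> complex) \<times> (real \<times> real \<Rightarrow> complex)) set" where
  "op_adjoint n G = {(v, w). v \<in> L2 n \<and> w \<in> L2 n \<and>
      (\<forall>(u, f) \<in> G. l2_inner n f v = l2_inner n u w)}"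

definition self_adjoint_op :: "nat \<Rightarrow> ((real \<times> real \<Rightarrow> complex) \<times> (real \<times> real \<Rightarrow> complex)) set \<Rightarrow> bool" where
  "self_adjoint_op n G = (op_adjoint n G = G)"

definition essentially_self_adjoint :: "nat \<Rightarrow> ((real \<times> real \<Rightarrow> complex) \<times> (real \<times> real \<Rightarrow> complex)) set \<Rightarrow> bool" where
  "essentially_self_adjoint n G = self_adjoint_op n (op_closure n G)"

end

theory Submission
  imports Defs "HOL-Real_Asymp.Real_Asymp"
begin

lemma bounded_from_limits:
  fixes k :: "real \<Rightarrow> real"
  assumes c: "continuous_on {1<..} k" and l1: "(k \<longlongrightarrow> 0) (at_right 1)" and l2: "(k \<longlongrightarrow> 0) at_top"
  shows "\<exists>M. \<forall>s>1. \<bar>k s\<bar> \<le> M"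
proof -
  have "eventually (\<lambda>s. dist (k s) 0 < 1) (at_right 1)"
    using l1 by (simp add: tendsto_iff)
  then obtain b where b: "b > 1" "\<And>s. s > 1 \<Longrightarrow> s < b \<Longrightarrow> \<bar>k s\<bar> < 1"
    unfolding eventually_at_right_field by auto
  have "eventually (\<lambda>s. dist (k s) 0 < 1) at_top"
    using l2 by (simp add: tendsto_iff)
  then obtain X where X: "\<And>s. s \<ge> X \<Longrightarrow> \<bar>k s\<bar> < 1"
    unfolding eventually_at_top_linorder by auto
  define a where "a = (1 + b) / 2"
  have a: "a > 1" "a < b" using b by (auto simp: a_def)
  have "continuous_on {a..max a X} k"
    using a by (intro continuous_on_subset[OF c]) auto
  then obtain B where B: "\<And>s. s \<in> {a..max a X} \<Longrightarrow> norm (k s) \<le> B"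
    using continuous_on_compact_bound[of "{a..max a X}" k] by auto
  show ?thesis
  proof (intro exI[of _ "max 1 B"] allI impI)
    fix s :: real assume s: "s > 1"
    show "\<bar>k s\<bar> \<le> max 1 B"
    proof (cases "s < a")
      case True then show ?thesis using b(2)[OF s] a by fastforce
    next
      case False
      show ?thesis
      proof (cases "s \<le> max a X")
        case True then show ?thesis using B[of s] False by fastforce
      next
        case False then show ?thesis using X[of s] by fastforce
      qed
    qed
  qed
qed

lemma majorant_integrable:
  "set_integrable lborel {1<..} (\<lambda>s::real. 1 / (sqrt (s - 1) * s))"
proof -
  have "set_integrable lborel (einterval 1 \<infinity>) (\<lambda>s::real. 1 / (sqrt (s - 1) * s))"
  proof (rule interval_integral_FTC_nonneg(1)[where F = "\<lambda>s. 2 * arctan (sqrt (s - 1))" and A = 0 and B = pi], goal_cases)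
    case 1 show ?case by simp
  next
    case (2 x)
    then have x: "x > 1" by simp
    show ?case
      using x by (auto intro!: derivative_eq_intros simp: field_simps)
  next
    case (3 x)
    then have x: "x > 1" by simp
    show ?case
      using x by (auto intro!: continuous_intros)
  next
    case 4 show ?case by (auto intro!: AE_I2)
  next
    case 5 
    have "((\<lambda>s. 2 * arctan (sqrt (s - 1))) \<longlongrightarrow> 0) (at_right 1)" by real_asymp
    then show ?case by (metis ereal_tendsto_simps1(2) one_ereal_def)
  next
    case 6
    have "((\<lambda>s. 2 * arctan (sqrt (s - 1))) \<longlongrightarrow> pi) at_top" by real_asymp
    then show ?case by (metis ereal_tendsto_simps1(3))
  qed
  moreover have "einterval 1 \<infinity> = {1::real<..}" by (auto simp: einterval_def)
  ultimately show ?thesis by simp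
qed

lemma set_borel_measurable_cont:
  fixes f :: "real \<Rightarrow> 'b::{banach, second_countable_topology}"
  assumes "continuous_on {1<..} f"
  shows "set_borel_measurable lborel {1<..} f"
  unfolding set_borel_measurable_def
  using borel_measurable_continuous_on_indicator[OF _ assms] by simp

lemma integrable_1_inf:
  fixes f :: "real \<Rightarrow> real"
  assumes c: "continuous_on {1<..} f"
  and l1: "((\<lambda>s. f s * sqrt(s-1) * s) \<longlongrightarrow> 0) (at_right 1)"
  and l2: "((\<lambda>s. f s * sqrt(s-1) * s) \<longlongrightarrow> 0) at_top"
  shows "set_integrable lborel {1<..} f"
proof -
  have "continuous_on {1<..} (\<lambda>s. f s * sqrt(s-1) * s)"
    by (intro continuous_intros c)
  then obtain M where M: "\<And>s. s > 1 \<Longrightarrow> \<bar>f s * sqrt(s-1) * s\<bar> \<le> M"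
    using bounded_from_limits[OF _ l1 l2] by blast
  show ?thesis
  proof (rule set_integrable_bound[OF set_integrable_mult_right[OF majorant_integrable, of M]])
    show "set_borel_measurable lborel {1<..} f" by (rule set_borel_measurable_cont[OF c])
    show "AE s in lborel. s \<in> {1<..} \<longrightarrow> norm (f s) \<le> norm (M * (1 / (sqrt (s - 1) * s)))"
    proof (rule AE_I2, intro impI)
      fix s :: real assume "s \<in> {1<..}"
      then have s: "s > 1" by simp
      have p: "sqrt (s-1) * s > 0" using s by simp
      have "\<bar>f s\<bar> * (sqrt (s-1) * s) \<le> M" using M[OF s] s by (simp add: abs_mult mult.assoc)
      then have "\<bar>f s\<bar> \<le> M / (sqrt (s-1) * s)" using p by (simp add: field_simps)
      also have "\<dots> \<le> \<bar>M\<bar> / (sqrt (s-1) * s)" using p by (intro divide_right_mono) auto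
      finally show "norm (f s) \<le> norm (M * (1 / (sqrt (s - 1) * s)))" using p by simp
    qed
  qed
qed

definition "tlg (s::real) = (s-1) * (ln (s-1) - 1)"
definition "lg (s::real) = ln (s-1)"
definition "fA (s::real) = (1 - tlg s/4) * exp(-s)"
definition "fA1 (s::real) = (- lg s/4 - 1 + tlg s/4) * exp(-s)"
definition "fA2 (s::real) = (- 1/(4*(s-1)) + lg s/2 + 1 - tlg s/4) * exp(-s)"
lemma tl_deriv[derivative_intros]: "s > 1 \<Longrightarrow> (tlg has_real_derivative lg s) (at s)"
proof -
  assume s: "s > 1"
  have d: "s - 1 \<noteq> 0" using s by simp
  show ?thesis unfolding tlg_def lg_def
    using s d by (auto intro!: derivative_eq_intros simp: divide_simps)
qed
lemma lg_deriv[derivative_intros]: "s > 1 \<Longrightarrow> (lg has_real_derivative 1/(s-1)) (at s)"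
  unfolding lg_def by (auto intro!: derivative_eq_intros)
lemma fA_deriv: assumes "s > 1" shows "(fA has_real_derivative fA1 s) (at s)"
  unfolding fA_def fA1_def using assms
  by (auto intro!: derivative_eq_intros simp: field_simps)
lemma fA1_deriv: assumes "s > 1" shows "(fA1 has_real_derivative fA2 s) (at s)"
  unfolding fA2_def fA1_def using assms
  by (auto intro!: derivative_eq_intros simp: field_simps)
definition "fB (s::real) = (s-1) * exp(-s)"
definition "fB1 (s::real) = (1-(s-1)) * exp(-s)"
definition "fB2 (s::real) = ((s-1)-2) * exp(-s)"
definition "Vt (s::real) = (s^4+1)^2/(4 * s^2 * (s^4-1))"
definition "LA (s::real) = fA2 s - fA1 s / s + Vt s * fA s"
definition "LB (s::real) = fB2 s - fB1 s / s + Vt s * fB s"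

lemmas fdefs = tlg_def lg_def LA_def LB_def fA_def fA1_def fA2_def fB_def fB1_def fB2_def Vt_def

lemma fB_deriv: "(fB has_real_derivative fB1 s) (at s)"
  unfolding fB_def fB1_def
  by (auto intro!: derivative_eq_intros simp: field_simps)
lemma fB1_deriv: "(fB1 has_real_derivative fB2 s) (at s)"
  unfolding fB2_def fB1_def
  by (auto intro!: derivative_eq_intros simp: field_simps)

lemma Vt_cont: "continuous_on {1<..} Vt"
proof -
  have "s^4 - 1 \<noteq> 0" if "s > 1" for s :: real
  proof -
    have "1 < s^4" using that by (simp add: one_less_power)
    then show ?thesis by simp
  qed
  then show ?thesis unfolding Vt_def by (auto intro!: continuous_intros)
qed

lemma cont_all: "continuous_on {1<..} fA" "continuous_on {1<..} fA1" "continuous_on {1<..} fA2"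
   "continuous_on {1<..} fB" "continuous_on {1<..} fB1" "continuous_on {1<..} fB2"
  unfolding fdefs by (auto intro!: continuous_intros)

lemma cont_L: "continuous_on {1<..} LA" "continuous_on {1<..} LB"
  unfolding LA_def LB_def using cont_all Vt_cont by (auto intro!: continuous_intros)

lemma I1: "set_integrable lborel {1<..} (\<lambda>s. (fA s ^ 2 + fB s ^ 2) / s)"
  apply (rule integrable_1_inf)
  using cont_all apply (auto intro!: continuous_intros)[1]
  unfolding fdefs by real_asymp+

lemma I2: "set_integrable lborel {1<..} (\<lambda>s. (LA s ^ 2 + LB s ^ 2) / s)"
  apply (rule integrable_1_inf)
  using cont_L apply (auto intro!: continuous_intros)[1]
  unfolding fdefs by real_asymp+

lemma I3: "set_integrable lborel {1<..} (\<lambda>s. (fA s * LB s - fB s * LA s) / s)"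
  apply (rule integrable_1_inf)
  using cont_L cont_all apply (auto intro!: continuous_intros)[1]
  unfolding fdefs by real_asymp+

lemma I4: "set_integrable lborel {1<..} (\<lambda>s. (fA s * LA s + fB s * LB s) / s)"
  apply (rule integrable_1_inf)
  using cont_L cont_all apply (auto intro!: continuous_intros)[1]
  unfolding fdefs by real_asymp+

lemma W_deriv: assumes "s > 1"
  shows "((\<lambda>s. (fA s * fB1 s - fB s * fA1 s) / s) has_real_derivative (fA s * LB s - fB s * LA s) / s) (at s)"
proof -
  have s0: "s \<noteq> 0" using assms by simp
  show ?thesis
    using assms s0
    by (auto intro!: derivative_eq_intros fA_deriv fA1_deriv fB_deriv fB1_deriv simp: LA_def LB_def field_simps)
qed

lemma FTC_W: "(LINT s:{1<..}|lborel. (fA s * LB s - fB s * LA s) / s) = - (exp (-1) * exp (-1))"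
proof -
  have "(LBINT s=ereal 1..\<infinity>. (fA s * LB s - fB s * LA s) / s) = 0 - exp (-1) * exp (-1)"
  proof (rule interval_integral_FTC_integrable[where F = "\<lambda>s. (fA s * fB1 s - fB s * fA1 s) / s"], goal_cases)
    case 1 show ?case by simp
  next
    case (2 x) then have "x > 1" by simp
    then show ?case using W_deriv[of x] by (simp add: has_real_derivative_iff_has_vector_derivative)
  next
    case (3 x) then have x: "x > 1" by simp
    have "continuous_on {1<..} (\<lambda>s. (fA s * LB s - fB s * LA s) / s)"
      using cont_all cont_L by (auto intro!: continuous_intros)
    then show ?case using x by (simp add: continuous_on_eq_continuous_at)
  next
    case 4
    have "einterval 1 \<infinity> = {1::real<..}" by (auto simp: einterval_def)
    then show ?case using I3 by simp
  next
    case 5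
    have "((\<lambda>s. (fA s * fB1 s - fB s * fA1 s) / s) \<longlongrightarrow> exp (-1) * exp (-1)) (at_right 1)"
      unfolding fdefs by real_asymp
    then show ?case by (metis ereal_tendsto_simps1(2))
  next
    case 6
    have "((\<lambda>s. (fA s * fB1 s - fB s * fA1 s) / s) \<longlongrightarrow> 0) at_top"
      unfolding fdefs by real_asymp
    then show ?case by (metis ereal_tendsto_simps1(3))
  qed
  moreover have "(LBINT s=ereal 1..\<infinity>. (fA s * LB s - fB s * LA s) / s) = (LINT s:{1<..}|lborel. (fA s * LB s - fB s * LA s) / s)"
  proof -
    have "einterval 1 \<infinity> = {1::real<..}" by (auto simp: einterval_def)
    then show ?thesis by (simp add: interval_lebesgue_integral_def)
  qed
  ultimately show ?thesis by simp
qed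

lemma indicator_Omega: "indicator (Omega n) p = (indicator {1/real n<..} (fst p) :: 'a::comm_semiring_1) * indicator {0..<2*pi} (snd p)"
  unfolding Omega_def by (cases p) (simp split: split_indicator)

lemma omega_nn:
  fixes F :: "real \<Rightarrow> real" and n :: nat
  assumes n: "n \<ge> 1" and F[measurable]: "F \<in> borel_measurable borel"
  shows "(\<integral>\<^sup>+ p \<in> Omega n. ennreal (F (real n * fst p) / \<bar>fst p\<bar>) \<partial>lborel)
       = ennreal (2*pi) * (\<integral>\<^sup>+ s \<in> {1<..}. ennreal (F s / s) \<partial>lborel)"
proof -
  have "(\<integral>\<^sup>+ p \<in> Omega n. ennreal (F (real n * fst p) / \<bar>fst p\<bar>) \<partial>lborel)
      = (\<integral>\<^sup>+ p. ennreal (F (real n * fst p) / \<bar>fst p\<bar>) * indicator {1/real n<..} (fst p) * indicator {0..<2*pi} (snd p) \<partial>(lborel \<Otimes>\<^sub>M lborel))"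
    by (simp add: lborel_prod indicator_Omega mult.assoc)
  also have "\<dots> = (\<integral>\<^sup>+ x. \<integral>\<^sup>+ y. ennreal (F (real n * x) / \<bar>x\<bar>) * indicator {1/real n<..} x * indicator {0..<2*pi} y \<partial>lborel \<partial>lborel)"
    by (rule lborel.nn_integral_fst[symmetric, where f = "\<lambda>p. ennreal (F (real n * fst p) / \<bar>fst p\<bar>) * indicator {1/real n<..} (fst p) * indicator {0..<2*pi} (snd p)", simplified]) measurable
  also have "\<dots> = (\<integral>\<^sup>+ x. ennreal (2*pi) * (ennreal (F (real n * x) / \<bar>x\<bar>) * indicator {1/real n<..} x) \<partial>lborel)"
    by (subst nn_integral_cmult_indicator) (auto simp: mult.commute)
  also have "\<dots> = ennreal (2*pi) * (\<integral>\<^sup>+ x. ennreal (F (real n * x) / \<bar>x\<bar>) * indicator {1/real n<..} x \<partial>lborel)"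
    by (rule nn_integral_cmult) measurable
  also have "(\<integral>\<^sup>+ x. ennreal (F (real n * x) / \<bar>x\<bar>) * indicator {1/real n<..} x \<partial>lborel)
      = (\<integral>\<^sup>+ s \<in> {1<..}. ennreal (F s / s) \<partial>lborel)"
  proof -
    have npos: "real n > 0" using n by simp
    have "(\<integral>\<^sup>+ s \<in> {1<..}. ennreal (F s / s) \<partial>lborel)
        = \<bar>real n\<bar> * (\<integral>\<^sup>+ x. ennreal (F (0 + real n * x) / (0 + real n * x)) * indicator {1<..} (0 + real n * x) \<partial>lborel)"
      by (rule nn_integral_real_affine) (use npos in auto)
    also have "\<dots> = (\<integral>\<^sup>+ x. ennreal (real n) * (ennreal (F (real n * x) / (real n * x)) * indicator {1<..} (real n * x)) \<partial>lborel)"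
      using npos by (subst nn_integral_cmult) auto
    also have "\<dots> = (\<integral>\<^sup>+ x. ennreal (F (real n * x) / \<bar>x\<bar>) * indicator {1/real n<..} x \<partial>lborel)"
    proof (rule nn_integral_cong)
      fix x :: real
      show "ennreal (real n) * (ennreal (F (real n * x) / (real n * x)) * indicator {1<..} (real n * x))
          = ennreal (F (real n * x) / \<bar>x\<bar>) * indicator {1/real n<..} x"
      proof (cases "x > 1 / real n")
        case True
        have "1 / real n > 0" using npos by simp
        then have x0: "x > 0" using True by linarith
        then have x: "x > 0" "real n * x > 1" using True npos by (auto simp: field_simps)
        have "ennreal (real n) * ennreal (F (real n * x) / (real n * x)) = ennreal (real n * (F (real n * x) / (real n * x)))"
          using npos by (subst ennreal_mult') auto
        also have "real n * (F (real n * x) / (real n * x)) = F (real n * x) / \<bar>x\<bar>" using x npos by simp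
        finally show ?thesis using True x by (simp add: mult.assoc[symmetric])
      next
        case False
        then have "\<not> real n * x > 1" using npos by (auto simp: field_simps)
        then show ?thesis using False by simp
      qed
    qed
    finally show ?thesis by simp
  qed
  finally show ?thesis .
qed

lemma omega_int:
  fixes H :: "real \<Rightarrow> complex" and n :: nat
  assumes n: "n \<ge> 1" and H[measurable]: "H \<in> borel_measurable borel"
  and int: "set_integrable lborel {1<..} (\<lambda>s. H s / complex_of_real s)"
  shows "set_integrable lborel (Omega n) (\<lambda>p. H (real n * fst p) / complex_of_real \<bar>fst p\<bar>)"
  and "(LINT p:Omega n|lborel. H (real n * fst p) / complex_of_real \<bar>fst p\<bar>)
        = complex_of_real (2*pi) * (LINT s:{1<..}|lborel. H s / complex_of_real s)"
proof -
  have npos: "real n > 0" using n by simp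
  have fin1: "(\<integral>\<^sup>+ s \<in> {1<..}. ennreal (cmod (H s) / s) \<partial>lborel) < \<infinity>"
  proof -
    have "(\<integral>\<^sup>+ s. ennreal (norm (indicator {1<..} s *\<^sub>R (H s / complex_of_real s))) \<partial>lborel) < \<infinity>"
      using int unfolding set_integrable_def integrable_iff_bounded by simp
    moreover have "(\<integral>\<^sup>+ s. ennreal (norm (indicator {1<..} s *\<^sub>R (H s / complex_of_real s))) \<partial>lborel)
        = (\<integral>\<^sup>+ s \<in> {1<..}. ennreal (cmod (H s) / s) \<partial>lborel)"
      by (intro nn_integral_cong) (auto split: split_indicator simp: norm_divide)
    ultimately show ?thesis by simp
  qed
  have eqn: "(\<integral>\<^sup>+ p. ennreal (norm (indicator (Omega n) p *\<^sub>R (H (real n * fst p) / complex_of_real \<bar>fst p\<bar>))) \<partial>lborel)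
      = (\<integral>\<^sup>+ p \<in> Omega n. ennreal (cmod (H (real n * fst p)) / \<bar>fst p\<bar>) \<partial>lborel)"
    by (intro nn_integral_cong) (auto split: split_indicator simp: norm_divide)
  show I: "set_integrable lborel (Omega n) (\<lambda>p. H (real n * fst p) / complex_of_real \<bar>fst p\<bar>)"
    unfolding set_integrable_def integrable_iff_bounded
  proof
    show "(\<lambda>p. indicator (Omega n) p *\<^sub>R (H (real n * fst p) / complex_of_real \<bar>fst p\<bar>)) \<in> borel_measurable lborel"
    proof -
      have "(\<lambda>p. indicator (Omega n) p *\<^sub>R (H (real n * fst p) / complex_of_real \<bar>fst p\<bar>)) \<in> borel_measurable (lborel \<Otimes>\<^sub>M lborel)"
        unfolding Omega_def by measurable
      then show ?thesis by (simp add: lborel_prod)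
    qed
    show "(\<integral>\<^sup>+ p. ennreal (norm (indicator (Omega n) p *\<^sub>R (H (real n * fst p) / complex_of_real \<bar>fst p\<bar>))) \<partial>lborel) < \<infinity>"
      unfolding eqn using omega_nn[of n "\<lambda>s. cmod (H s)"] n fin1
      by (simp add: ennreal_mult_less_top)
  qed
  define h where "h x = indicator {1/real n<..} x *\<^sub>R (H (real n * x) / complex_of_real \<bar>x\<bar>)" for x
  have "(LINT p:Omega n|lborel. H (real n * fst p) / complex_of_real \<bar>fst p\<bar>)
      = integral\<^sup>L (lborel \<Otimes>\<^sub>M lborel) (\<lambda>p. indicator {0..<2*pi} (snd p) *\<^sub>R h (fst p))"
    unfolding set_lebesgue_integral_def lborel_prod h_def
    by (intro Bochner_Integration.integral_cong refl) (auto simp: Omega_def split: split_indicator)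
  also have "\<dots> = (LINT x|lborel. LINT y|lborel. indicator {0..<2*pi} y *\<^sub>R h x)"
  proof -
    have "integrable lborel (\<lambda>p. indicator (Omega n) p *\<^sub>R (H (real n * fst p) / complex_of_real \<bar>fst p\<bar>))"
      using I unfolding set_integrable_def .
    moreover have "(\<lambda>p. indicator (Omega n) p *\<^sub>R (H (real n * fst p) / complex_of_real \<bar>fst p\<bar>)) = (\<lambda>p. indicator {0..<2*pi} (snd p) *\<^sub>R h (fst p))"
      by (auto simp: Omega_def h_def split: split_indicator)
    ultimately have "integrable (lborel \<Otimes>\<^sub>M lborel) (\<lambda>p. indicator {0..<2*pi} (snd p) *\<^sub>R h (fst p))"
      by (simp add: lborel_prod)
    from lborel_pair.integral_fst'[OF this] show ?thesis by simp
  qed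
  also have "\<dots> = (LINT x|lborel. (2*pi) *\<^sub>R h x)"
    by (simp add: integral_scaleR_left)
  also have "\<dots> = (2*pi) *\<^sub>R (LINT x|lborel. h x)"
    by simp
  also have "(LINT x|lborel. h x) = (LINT s:{1<..}|lborel. H s / complex_of_real s)"
  proof -
    have "(LINT s:{1<..}|lborel. H s / complex_of_real s)
        = \<bar>real n\<bar> *\<^sub>R (LINT x|lborel. indicator {1<..} (0 + real n * x) *\<^sub>R (H (0 + real n * x) / complex_of_real (0 + real n * x)))"
      unfolding set_lebesgue_integral_def
      by (rule lborel_integral_real_affine) (use npos in auto)
    also have "\<dots> = (LINT x|lborel. real n *\<^sub>R (indicator {1<..} (real n * x) *\<^sub>R (H (real n * x) / complex_of_real (real n * x))))"
      using npos by (subst integral_scaleR_right) simp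
    also have "\<dots> = (LINT x|lborel. h x)"
    proof (intro Bochner_Integration.integral_cong refl)
      fix x :: real
      show "real n *\<^sub>R (indicator {1<..} (real n * x) *\<^sub>R (H (real n * x) / complex_of_real (real n * x))) = h x"
      proof (cases "x > 1 / real n")
        case True
        have "1 / real n > 0" using npos by simp
        then have x0: "x > 0" using True by linarith
        then have x: "x > 0" "real n * x > 1" using True npos by (auto simp: field_simps)
        then show ?thesis using True npos unfolding h_def
          by (simp add: scaleR_conv_of_real field_simps)
      next
        case False
        then have "\<not> real n * x > 1" using npos by (auto simp: field_simps)
        then show ?thesis using False by (simp add: h_def)
      qed
    qed
    finally show ?thesis by simp
  qed
  finally show "(LINT p:Omega n|lborel. H (real n * fst p) / complex_of_real \<bar>fst p\<bar>)
        = complex_of_real (2*pi) * (LINT s:{1<..}|lborel. H s / complex_of_real s)"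
    by (simp add: scaleR_conv_of_real)
qed

lemma set_integrable_cor:
  assumes "set_integrable M A (f :: _ \<Rightarrow> real)"
  shows "set_integrable M A (\<lambda>x. complex_of_real (f x))"
proof -
  have "integrable M (\<lambda>x. complex_of_real (indicator A x *\<^sub>R f x))"
    using assms unfolding set_integrable_def by (rule integrable_bounded_linear[OF bounded_linear_of_real])
  moreover have "(\<lambda>x. complex_of_real (indicator A x *\<^sub>R f x)) = (\<lambda>x. indicator A x *\<^sub>R complex_of_real (f x))"
    by (auto simp: split: split_indicator)
  ultimately show ?thesis unfolding set_integrable_def by simp
qed

lemma set_integrable_nn_fin:
  assumes "set_integrable lborel A (f :: real \<Rightarrow> real)"
  shows "(\<integral>\<^sup>+ x \<in> A. ennreal (f x) \<partial>lborel) < \<infinity>"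
proof -
  have "(\<integral>\<^sup>+ x. ennreal (norm (indicator A x *\<^sub>R f x)) \<partial>lborel) < \<infinity>"
    using assms unfolding set_integrable_def integrable_iff_bounded by simp
  moreover have "(\<integral>\<^sup>+ x \<in> A. ennreal (f x) \<partial>lborel) \<le> (\<integral>\<^sup>+ x. ennreal (norm (indicator A x *\<^sub>R f x)) \<partial>lborel)"
    by (intro nn_integral_mono) (auto split: split_indicator intro: ennreal_leI)
  ultimately show ?thesis by (rule le_less_trans[rotated])
qed

lemma borel_measurable_cnj[measurable]:
  assumes [measurable]: "f \<in> borel_measurable M"
  shows "(\<lambda>x. cnj (f x)) \<in> borel_measurable M"
proof -
  have "cnj \<in> borel_measurable borel"
    by (intro borel_measurable_continuous_onI continuous_intros)
  then show ?thesis using measurable_compose[OF assms] by blast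
qed

definition vc :: "real \<Rightarrow> complex" where "vc s = complex_of_real (fA s) + \<i> * complex_of_real (fB s)"
definition wc :: "real \<Rightarrow> complex" where "wc s = complex_of_real (LA s) + \<i> * complex_of_real (LB s)"
definition vv :: "nat \<Rightarrow> real \<times> real \<Rightarrow> complex" where "vv n p = vc (real n * fst p)"
definition ww :: "nat \<Rightarrow> real \<times> real \<Rightarrow> complex" where "ww n p = complex_of_real ((real n)^2) * wc (real n * fst p)"

lemma meas_f[measurable]: "fA \<in> borel_measurable borel" "fB \<in> borel_measurable borel"
   "LA \<in> borel_measurable borel" "LB \<in> borel_measurable borel"
  unfolding fdefs by measurable

lemma meas_vc[measurable]: "vc \<in> borel_measurable borel" "wc \<in> borel_measurable borel"
  unfolding vc_def wc_def by measurable

lemma meas_vv: "vv n \<in> borel_measurable lborel" "ww n \<in> borel_measurable lborel"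
proof -
  have "(\<lambda>p. vc (real n * fst p)) \<in> borel_measurable (lborel \<Otimes>\<^sub>M lborel)" by measurable
  then show "vv n \<in> borel_measurable lborel" by (simp add: lborel_prod vv_def[abs_def])
  have "(\<lambda>p. complex_of_real ((real n)^2) * wc (real n * fst p)) \<in> borel_measurable (lborel \<Otimes>\<^sub>M lborel)" by measurable
  then show "ww n \<in> borel_measurable lborel" by (simp add: lborel_prod ww_def[abs_def])
qed

lemma vv_L2: assumes "n \<ge> 1" shows "vv n \<in> L2 n"
proof -
  have "(\<integral>\<^sup>+ p \<in> Omega n. ennreal ((cmod (vv n p))\<^sup>2 / \<bar>fst p\<bar>) \<partial>lborel)
      = ennreal (2*pi) * (\<integral>\<^sup>+ s \<in> {1<..}. ennreal ((fA s ^ 2 + fB s ^ 2) / s) \<partial>lborel)"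
    using omega_nn[OF assms, of "\<lambda>s. fA s ^ 2 + fB s ^ 2"]
    by (simp add: vv_def vc_def cmod_power2)
  also have "\<dots> < \<infinity>" using set_integrable_nn_fin[OF I1] by (simp add: ennreal_mult_less_top)
  finally show ?thesis unfolding L2_def using meas_vv by simp
qed

lemma ww_L2: assumes "n \<ge> 1" shows "ww n \<in> L2 n"
proof -
  have "(\<integral>\<^sup>+ p \<in> Omega n. ennreal ((cmod (ww n p))\<^sup>2 / \<bar>fst p\<bar>) \<partial>lborel)
      = ennreal (2*pi) * (\<integral>\<^sup>+ s \<in> {1<..}. ennreal ((real n)^4 * ((LA s ^ 2 + LB s ^ 2) / s)) \<partial>lborel)"
    using omega_nn[OF assms, of "\<lambda>s. (real n)^4 * (LA s ^ 2 + LB s ^ 2)"]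
    by (simp add: ww_def wc_def cmod_power2 norm_mult power_mult_distrib)
  also have "\<dots> < \<infinity>" using set_integrable_nn_fin[OF set_integrable_mult_right[OF I2, of "(real n)^4"]]
    by (simp add: ennreal_mult_less_top)
  finally show ?thesis unfolding L2_def using meas_vv by simp
qed

lemma inner_ww_vv: assumes "n \<ge> 1" shows "Im (l2_inner n (ww n) (vv n)) \<noteq> 0"
proof -
  define R where "R s = (real n)^2 * ((fA s * LA s + fB s * LB s) / s)" for s
  define J where "J s = (real n)^2 * ((fA s * LB s - fB s * LA s) / s)" for s
  define H where "H s = complex_of_real ((real n)^2) * wc s * cnj (vc s)" for s
  have Heq: "H s / complex_of_real s = complex_of_real (R s) + \<i> * complex_of_real (J s)" for s
    by (simp add: H_def R_def J_def wc_def vc_def complex_eq_iff field_simps)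
  have iR: "set_integrable lborel {1<..} (\<lambda>s. complex_of_real (R s))"
    unfolding R_def by (intro set_integrable_cor set_integrable_mult_right I4)
  have iJ: "set_integrable lborel {1<..} (\<lambda>s. \<i> * complex_of_real (J s))"
    unfolding J_def by (intro set_integrable_mult_right set_integrable_cor I3)
  have iH: "set_integrable lborel {1<..} (\<lambda>s. H s / complex_of_real s)"
    unfolding Heq using iR iJ by (rule set_integral_add)
  have "l2_inner n (ww n) (vv n) = (LINT p:Omega n|lborel. H (real n * fst p) / complex_of_real \<bar>fst p\<bar>)"
    unfolding l2_inner_def by (simp add: H_def ww_def vv_def mult.assoc)
  also have "\<dots> = complex_of_real (2*pi) * (LINT s:{1<..}|lborel. H s / complex_of_real s)"
  proof -
    have "H \<in> borel_measurable borel" unfolding H_def by measurable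
    from omega_int(2)[OF assms this iH] show ?thesis .
  qed
  also have "(LINT s:{1<..}|lborel. H s / complex_of_real s)
      = complex_of_real (LINT s:{1<..}|lborel. R s) + \<i> * complex_of_real (LINT s:{1<..}|lborel. J s)"
    unfolding Heq using set_integral_add(2)[OF iR iJ] by (simp add: set_integral_complex_of_real)
  also have "(LINT s:{1<..}|lborel. J s) = (real n)^2 * (- (exp (-1) * exp (-1)))"
    unfolding J_def by (subst set_integral_mult_right) (simp only: FTC_W)
  finally have "Im (l2_inner n (ww n) (vv n)) = 2 * pi * ((real n)^2 * (- (exp (-1) * exp (-1))))"
    by simp
  moreover have "2 * pi * ((real n)^2 * (- (exp (-1) * exp (-1)))) \<noteq> 0" using assms by simp
  ultimately show ?thesis by simp
qed

lemma smooth_diff: "smooth2 g \<Longrightarrow> pd ws g differentiable (at p)"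
  unfolding smooth2_def by blast

lemma smooth_cont: "smooth2 g \<Longrightarrow> continuous_on UNIV (pd ws g)"
  by (intro continuous_at_imp_continuous_on ballI differentiable_imp_continuous_within smooth_diff)

lemma smooth_cont': assumes "smooth2 g"
  shows "continuous_on UNIV g" "continuous_on UNIV (pdx g)" "continuous_on UNIV (pdy g)"
    "continuous_on UNIV (pdx (pdx g))" "continuous_on UNIV (pdy (pdy g))"
  using smooth_cont[OF assms, of "[]"] smooth_cont[OF assms, of "[True]"] smooth_cont[OF assms, of "[False]"]
     smooth_cont[OF assms, of "[True,True]"] smooth_cont[OF assms, of "[False,False]"] by simp_all

lemma pdx_deriv:
  assumes "h differentiable (at (x,y))"
  shows "((\<lambda>t. h (t,y)) has_vector_derivative pdx h (x,y)) (at x)"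
proof -
  have "((\<lambda>t. (t,y)) has_derivative (\<lambda>t. (t,0))) (at x)"
    by (auto intro!: derivative_eq_intros)
  then have "(\<lambda>t. (t,y)) differentiable (at x)" by (rule differentiableI)
  from differentiable_chain_at[OF this] assms have "((\<lambda>t. h (t,y))) differentiable (at x)"
    by (simp add: o_def)
  then show ?thesis unfolding pdx_def by (simp add: vector_derivative_works)
qed

lemma pdy_deriv:
  assumes "h differentiable (at (x,y))"
  shows "((\<lambda>t. h (x,t)) has_vector_derivative pdy h (x,y)) (at y)"
proof -
  have "((\<lambda>t. (x,t)) has_derivative (\<lambda>t. (0,t))) (at y)"
    by (auto intro!: derivative_eq_intros)
  then have "(\<lambda>t. (x,t)) differentiable (at y)" by (rule differentiableI)
  from differentiable_chain_at[OF this] assms have "((\<lambda>t. h (x,t))) differentiable (at y)"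
    by (simp add: o_def)
  then show ?thesis unfolding pdy_def by (simp add: vector_derivative_works)
qed

lemma pdx_zero:
  assumes h: "\<And>x y. x \<notin> {a..b} \<Longrightarrow> h (x,y) = 0" and x: "x \<notin> {a..b}"
  shows "pdx h (x,y) = 0"
proof -
  have "((\<lambda>t. 0) has_vector_derivative 0) (at x)" by (rule has_vector_derivative_const)
  then have "((\<lambda>t. h (t,y)) has_vector_derivative 0) (at x)"
    by (rule has_vector_derivative_transform_within_open[where S = "- {a..b}"]) (use x h in auto)
  then show ?thesis unfolding pdx_def by (simp add: vector_derivative_at)
qed

lemma pdy_zero:
  assumes h: "\<And>x y. x \<notin> {a..b} \<Longrightarrow> h (x,y) = 0" and x: "x \<notin> {a..b}"
  shows "pdy h (x,y) = 0"
proof -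
  have "(\<lambda>t. h (x,t)) = (\<lambda>t. 0)" using h x by auto
  then show ?thesis unfolding pdy_def by (simp add: vector_derivative_at)
qed

lemma pdy_periodic:
  assumes d: "\<And>p. h differentiable (at p)" and per: "\<And>x y. h (x, y + 2*pi) = h (x,y)"
  shows "pdy h (x, y + 2*pi) = pdy h (x,y)"
proof -
  have D: "((\<lambda>t. h (x,t)) has_vector_derivative pdy h (x,y)) (at y)" by (rule pdy_deriv[OF d])
  have s: "((\<lambda>t. t - 2*pi) has_vector_derivative 1) (at (y + 2*pi))"
    by (auto intro!: derivative_eq_intros)
  have "(((\<lambda>t. h (x,t)) \<circ> (\<lambda>t. t - 2*pi)) has_vector_derivative (1 *\<^sub>R pdy h (x,y))) (at (y + 2*pi))"
    by (rule vector_diff_chain_at[OF s]) (simp add: D)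
  moreover have "((\<lambda>t. h (x,t)) \<circ> (\<lambda>t. t - 2*pi)) = (\<lambda>t. h (x,t))"
  proof
    fix t show "((\<lambda>t. h (x,t)) \<circ> (\<lambda>t. t - 2*pi)) t = h (x,t)"
      using per[of x "t - 2*pi"] by simp
  qed
  ultimately have "((\<lambda>t. h (x,t)) has_vector_derivative pdy h (x,y)) (at (y + 2*pi))" by simp
  then show ?thesis unfolding pdy_def by (simp add: vector_derivative_at)
qed

definition pc :: "real \<Rightarrow> complex" where "pc s = complex_of_real (fA s) - \<i> * complex_of_real (fB s)"
definition pc1 :: "real \<Rightarrow> complex" where "pc1 s = complex_of_real (fA1 s) - \<i> * complex_of_real (fB1 s)"
definition pc2 :: "real \<Rightarrow> complex" where "pc2 s = complex_of_real (fA2 s) - \<i> * complex_of_real (fB2 s)"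
definition qc :: "real \<Rightarrow> complex" where "qc s = complex_of_real (LA s) - \<i> * complex_of_real (LB s)"

lemma cnj_vc: "cnj (vc s) = pc s" and cnj_wc: "cnj (wc s) = qc s"
  by (simp_all add: vc_def pc_def wc_def qc_def)

lemma fA_chain[derivative_intros]:
  "(g has_real_derivative g') (at x) \<Longrightarrow> g x > 1 \<Longrightarrow> ((\<lambda>x. fA (g x)) has_real_derivative fA1 (g x) * g') (at x)"
  by (rule DERIV_chain2[OF fA_deriv])
lemma fA1_chain[derivative_intros]:
  "(g has_real_derivative g') (at x) \<Longrightarrow> g x > 1 \<Longrightarrow> ((\<lambda>x. fA1 (g x)) has_real_derivative fA2 (g x) * g') (at x)"
  by (rule DERIV_chain2[OF fA1_deriv])
lemma fB_chain[derivative_intros]: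
  "(g has_real_derivative g') (at x) \<Longrightarrow> ((\<lambda>x. fB (g x)) has_real_derivative fB1 (g x) * g') (at x)"
  by (rule DERIV_chain2[OF fB_deriv])
lemma fB1_chain[derivative_intros]:
  "(g has_real_derivative g') (at x) \<Longrightarrow> ((\<lambda>x. fB1 (g x)) has_real_derivative fB2 (g x) * g') (at x)"
  by (rule DERIV_chain2[OF fB1_deriv])

lemma pc_deriv: assumes "real n * x > 1"
  shows "((\<lambda>t. pc (real n * t)) has_vector_derivative (complex_of_real (real n) * pc1 (real n * x))) (at x)"
  unfolding pc_def pc1_def using assms
  by (auto intro!: derivative_eq_intros simp: algebra_simps)

lemma pc1_deriv: assumes "real n * x > 1"
  shows "((\<lambda>t. complex_of_real (real n) * pc1 (real n * t)) has_vector_derivative (complex_of_real ((real n)^2) * pc2 (real n * x))) (at x)"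
  unfolding pc2_def pc1_def using assms
  by (auto intro!: derivative_eq_intros simp: algebra_simps power2_eq_square)

lemma Vpot_Vt: assumes "n \<ge> 1" shows "Vpot n x = (real n)^2 * Vt (real n * x)"
proof (cases "x = 0")
  case True then show ?thesis by (simp add: Vpot_def Vt_def)
next
  case False
  have n: "real n \<noteq> 0" using assms by simp
  define N where "N = ((real n)^4 * x^4 + 1)\<^sup>2"
  define D where "D = 4 * x\<^sup>2 * ((real n)^4 * x^4 - 1)"
  have den: "4 * (real n * x)^2 * ((real n * x)^4 - 1) = (real n)^2 * D"
    unfolding D_def by (simp add: power_mult_distrib algebra_simps)
  have num: "((real n * x)^4 + 1)^2 = N" unfolding N_def by (simp add: power_mult_distrib)
  have "Vt (real n * x) = N / ((real n)^2 * D)" unfolding Vt_def num den ..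
  moreover have "Vpot n x = N / D" unfolding Vpot_def N_def D_def ..
  moreover have "(real n)^2 * (N / ((real n)^2 * D)) = N / D"
    using n by (cases "D = 0") (simp_all add: field_simps)
  ultimately show ?thesis by simp
qed

lemma ode_identity: assumes "n \<ge> 1" "x > 0"
  shows "complex_of_real ((real n)^2) * pc2 (real n * x) - complex_of_real (1/x) * (complex_of_real (real n) * pc1 (real n * x))
     + complex_of_real (Vpot n x) * pc (real n * x) = complex_of_real ((real n)^2) * qc (real n * x)"
proof -
  have n: "real n \<noteq> 0" using assms by simp
  show ?thesis unfolding Vpot_Vt[OF assms(1)] pc_def pc1_def pc2_def qc_def LA_def LB_def
    using n assms(2) by (simp add: complex_eq_iff field_simps power2_eq_square)
qed

lemma P_deriv:
  fixes ph phd ps psd :: "real \<Rightarrow> complex"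
  assumes d1: "(ph has_vector_derivative phd t) (at t)" and d2: "(phd has_vector_derivative f2) (at t)"
   and d3: "(ps has_vector_derivative psd t) (at t)" and d4: "(psd has_vector_derivative g2) (at t)" and t: "t \<noteq> 0"
  shows "((\<lambda>t. (phd t * ps t - ph t * psd t) / complex_of_real t) has_vector_derivative
     ((f2 - phd t / complex_of_real t + V * ph t) * ps t - ph t * (g2 - psd t / complex_of_real t + V * ps t)) / complex_of_real t) (at t)"
proof -
  have "((\<lambda>t. 1/t) has_real_derivative (- 1 / t^2)) (at t)"
    using t by (auto intro!: derivative_eq_intros simp: field_simps power2_eq_square)
  then have inv: "((\<lambda>t. complex_of_real (1/t)) has_vector_derivative complex_of_real (- 1 / t^2)) (at t)"
    by (rule has_vector_derivative_of_real)
  have "((\<lambda>t. complex_of_real (1/t) * (phd t * ps t - ph t * psd t)) has_vector_derivative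
     (complex_of_real (1/t) * ((phd t * psd t + f2 * ps t) - (ph t * g2 + phd t * psd t)) + complex_of_real (- 1 / t^2) * (phd t * ps t - ph t * psd t))) (at t)"
    by (intro has_vector_derivative_mult has_vector_derivative_diff inv d1 d2 d3 d4)
  moreover have "(\<lambda>t. complex_of_real (1/t) * (phd t * ps t - ph t * psd t)) = (\<lambda>t. (phd t * ps t - ph t * psd t) / complex_of_real t)"
    by (auto simp: field_simps)
  moreover have "complex_of_real (1/t) * ((phd t * psd t + f2 * ps t) - (ph t * g2 + phd t * psd t)) + complex_of_real (- 1 / t^2) * (phd t * ps t - ph t * psd t)
     = ((f2 - phd t / complex_of_real t + V * ph t) * ps t - ph t * (g2 - psd t / complex_of_real t + V * ps t)) / complex_of_real t"
    using t by (simp add: field_simps power2_eq_square)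
  ultimately show ?thesis by simp
qed

lemma box_integral:
  fixes F :: "real \<times> real \<Rightarrow> complex"
  assumes a': "1/real n < a'"
   and cont: "continuous_on (cbox (a',0) (b',2*pi)) F" and meas: "F \<in> borel_measurable borel"
   and van: "\<And>x y. x \<notin> {a'..b'} \<Longrightarrow> F (x,y) = 0"
  shows "(LINT p:Omega n|lborel. F p) = integral (cbox (a',0) (b',2*pi)) F"
proof -
  define K where "K = cbox (a',0) (b',2*pi)"
  have int: "set_integrable lborel K F" unfolding set_integrable_def K_def
    by (rule borel_integrable_compact[OF compact_cbox cont])
  have "(LINT p:K|lborel. F p) = integral K F" by (rule set_borel_integral_eq_integral(2)[OF int])
  moreover have "(LINT p:Omega n|lborel. F p) = (LINT p:K|lborel. F p)"
    unfolding set_lebesgue_integral_def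
  proof (rule integral_cong_AE)
    have "Omega n \<in> sets (lborel \<Otimes>\<^sub>M lborel)" unfolding Omega_def by (rule pair_measureI) auto
    then have "Omega n \<in> sets (lborel :: (real \<times> real) measure)" by (simp only: lborel_prod)
    then have [measurable]: "Omega n \<in> sets borel" by simp
    have [measurable]: "K \<in> sets borel" unfolding K_def by (simp add: borel_closed)
    show "(\<lambda>p. indicator (Omega n) p *\<^sub>R F p) \<in> borel_measurable lborel" using meas by measurable
    show "(\<lambda>p. indicator K p *\<^sub>R F p) \<in> borel_measurable lborel" using meas by measurable
    have null: "UNIV \<times> {2*pi} \<in> null_sets (lborel \<Otimes>\<^sub>M (lborel :: real measure))"
      by (intro lborel.times_in_null_sets2) auto
    show "AE p in lborel. indicator (Omega n) p *\<^sub>R F p = indicator K p *\<^sub>R F p"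
    proof (rule AE_I'[of "UNIV \<times> {2*pi}"])
      show "UNIV \<times> {2*pi} \<in> null_sets lborel" using null by (simp add: lborel_prod)
      show "{p \<in> space lborel. indicator (Omega n) p *\<^sub>R F p \<noteq> indicator K p *\<^sub>R F p} \<subseteq> UNIV \<times> {2*pi}"
      proof
        fix p assume "p \<in> {p \<in> space lborel. indicator (Omega n) p *\<^sub>R F p \<noteq> indicator K p *\<^sub>R F p}"
        moreover obtain x y where p: "p = (x,y)" by (cases p)
        ultimately have ne: "indicator (Omega n) (x,y) *\<^sub>R F (x,y) \<noteq> indicator K (x,y) *\<^sub>R F (x,y)" by simp
        then have Fne: "F (x,y) \<noteq> 0" by auto
        then have "x \<in> {a'..b'}" using van by blast
        then have "x > 1/real n" using a' by auto
        have mem: "((x,y) \<in> Omega n) \<noteq> ((x,y) \<in> K)"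
          using ne by (auto simp: indicator_def split: if_splits)
        have "y = 2*pi" using mem \<open>x \<in> {a'..b'}\<close> \<open>x > 1/real n\<close>
          by (auto simp: Omega_def K_def cbox_Pair_eq)
        then show "p \<in> UNIV \<times> {2*pi}" using p by simp
      qed
    qed
  qed
  ultimately show ?thesis unfolding K_def by simp
qed

lemma cont_pcq: "continuous_on {1<..} pc" "continuous_on {1<..} qc"
  unfolding pc_def qc_def using cont_all cont_L by (auto intro!: continuous_intros)

lemma cont_half:
  assumes n: "n \<ge> 1"
  shows "continuous_on {p::real\<times>real. fst p > 1/real n} (\<lambda>p. pc (real n * fst p))"
    "continuous_on {p::real\<times>real. fst p > 1/real n} (\<lambda>p. qc (real n * fst p))"
    "continuous_on {p::real\<times>real. fst p > 1/real n} (\<lambda>p. Vt (real n * fst p))"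
proof -
  have img: "(\<lambda>p::real\<times>real. real n * fst p) ` {p. fst p > 1/real n} \<subseteq> {1<..}"
    using n by (auto simp: field_simps)
  have c: "continuous_on {p::real\<times>real. fst p > 1/real n} (\<lambda>p. real n * fst p)"
    by (intro continuous_intros)
  show "continuous_on {p::real\<times>real. fst p > 1/real n} (\<lambda>p. pc (real n * fst p))"
    by (rule continuous_on_compose2[OF cont_pcq(1) c img])
  show "continuous_on {p::real\<times>real. fst p > 1/real n} (\<lambda>p. qc (real n * fst p))"
    by (rule continuous_on_compose2[OF cont_pcq(2) c img])
  show "continuous_on {p::real\<times>real. fst p > 1/real n} (\<lambda>p. Vt (real n * fst p))"
    by (rule continuous_on_compose2[OF Vt_cont c img])
qed

lemma cnj_vv: "cnj (vv n p) = pc (real n * fst p)" by (simp add: vv_def cnj_vc)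
lemma cnj_ww: "cnj (ww n p) = complex_of_real ((real n)^2) * qc (real n * fst p)" by (simp add: ww_def cnj_wc)

lemma Dex_eq: "Dex n g = (\<lambda>p. pdx (pdx g) p + complex_of_real ((fst p)\<^sup>2) * pdy (pdy g) p
      - complex_of_real (1 / fst p) * pdx g p + complex_of_real (Vpot n (fst p)) * g p)"
  by (auto simp: Dex_def fun_eq_iff)

lemma meas_Vpot[measurable]: "Vpot n \<in> borel_measurable borel"
  unfolding Vpot_def by measurable

lemma meas_smooth: assumes "smooth2 g" shows "pd ws g \<in> borel_measurable borel"
  by (rule borel_measurable_continuous_onI[OF smooth_cont[OF assms]])

lemma test_identity:
  assumes n: "n \<ge> 1" and tf: "test_fun n g"
  shows "l2_inner n (Dex n g) (vv n) = l2_inner n g (ww n)"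
proof -
  from tf have sm: "smooth2 g" and per: "\<And>x y. g (x, y + 2*pi) = g (x,y)"
    and "\<exists>a b. 1/real n < a \<and> (\<forall>x y. x \<notin> {a..b} \<longrightarrow> g (x,y) = 0)" unfolding test_fun_def by auto
  then obtain a b where a: "1/real n < a" and van0: "\<And>x y. x \<notin> {a..b} \<Longrightarrow> g (x,y) = 0" by blast
  define a' where "a' = (1/real n + a)/2"
  define b' where "b' = max a b + 1"
  have npos: "real n > 0" using n by simp
  have ninv: "1 / real n > 0" using npos by simp
  have a'1: "1/real n < a'" "a' < a" using a by (auto simp: a'_def)
  have ab': "a' \<le> b'" using a'1 by (auto simp: b'_def)
  have out: "x \<notin> {a..b}" if "x \<notin> {a'..b'}" for x using that a'1 by (auto simp: b'_def)
  have outa: "a' \<notin> {a..b}" and outb: "b' \<notin> {a..b}" using a'1 by (auto simp: b'_def)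
  have pos: "x > 0" if "x \<in> {a'..b'}" for x
  proof -
    have "a' \<le> x" using that by simp
    then show ?thesis using a'1(1) ninv by linarith
  qed
  have gt: "real n * x > 1" if "x \<in> {a'..b'}" for x
  proof -
    have "x > 1 / real n" using that a'1 by auto
    then show ?thesis using npos by (simp add: field_simps)
  qed
  have van1: "\<And>x y. x \<notin> {a..b} \<Longrightarrow> pdx g (x,y) = 0" by (rule pdx_zero[where h = g, OF van0])
  have van2: "\<And>x y. x \<notin> {a..b} \<Longrightarrow> pdx (pdx g) (x,y) = 0" by (rule pdx_zero[where h = "pdx g", OF van1])
  have vany1: "\<And>x y. x \<notin> {a..b} \<Longrightarrow> pdy g (x,y) = 0" by (rule pdy_zero[where h = g, OF van0])
  have vany2: "\<And>x y. x \<notin> {a..b} \<Longrightarrow> pdy (pdy g) (x,y) = 0" by (rule pdy_zero[where h = "pdy g", OF vany1])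
  have dg: "\<And>ws p. pd ws g differentiable (at p)" using sm smooth_diff by blast
  have d0: "\<And>p. g differentiable (at p)" using dg[of "[]"] by simp
  have d1: "\<And>p. pdx g differentiable (at p)" using dg[of "[True]"] by simp
  have dy1: "\<And>p. pdy g differentiable (at p)" using dg[of "[False]"] by simp
  note cg = smooth_cont'[OF sm]
  have mg[measurable]: "g \<in> borel_measurable borel" "pdx g \<in> borel_measurable borel" "pdx (pdx g) \<in> borel_measurable borel"
     "pdy (pdy g) \<in> borel_measurable borel"
    using meas_smooth[OF sm, of "[]"] meas_smooth[OF sm, of "[True]"] meas_smooth[OF sm, of "[True,True]"]
      meas_smooth[OF sm, of "[False,False]"] by simp_all
  have mpq[measurable]: "pc \<in> borel_measurable borel" "qc \<in> borel_measurable borel"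
    unfolding pc_def qc_def by measurable

  define K where "K = cbox (a',0) (b',2*pi)"
  define U where "U = {p::real\<times>real. fst p > 1/real n}"
  have KU: "K \<subseteq> U" using a'1 by (auto simp: K_def U_def cbox_Pair_eq)

  define F1 where "F1 p = (pdx (pdx g) p - complex_of_real (1 / fst p) * pdx g p + complex_of_real (Vpot n (fst p)) * g p) * pc (real n * fst p) / complex_of_real \<bar>fst p\<bar>" for p
  define F2 where "F2 p = complex_of_real ((fst p)\<^sup>2) * pdy (pdy g) p * pc (real n * fst p) / complex_of_real \<bar>fst p\<bar>" for p
  define G where "G p = g p * (complex_of_real ((real n)^2) * qc (real n * fst p)) / complex_of_real \<bar>fst p\<bar>" for p

  have LHS: "l2_inner n (Dex n g) (vv n) = (LINT p:Omega n|lborel. F1 p + F2 p)"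
  proof -
    have "Dex n g p * cnj (vv n p) / complex_of_real \<bar>fst p\<bar> = F1 p + F2 p" for p
      unfolding Dex_eq cnj_vv F1_def F2_def by (simp add: add_divide_distrib diff_divide_distrib algebra_simps)
    then show ?thesis unfolding l2_inner_def by simp
  qed
  have RHS: "l2_inner n g (ww n) = (LINT p:Omega n|lborel. G p)"
    unfolding l2_inner_def cnj_ww G_def ..
  have U0: "fst p \<noteq> 0" if "p \<in> U" for p using that ninv by (auto simp: U_def)
  have cV: "continuous_on U (\<lambda>p. complex_of_real (Vpot n (fst p)))"
  proof -
    have "continuous_on U (\<lambda>p. complex_of_real ((real n)^2 * Vt (real n * fst p)))"
      unfolding U_def by (intro continuous_intros cont_half[OF n])
    then show ?thesis by (simp add: Vpot_Vt[OF n])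
  qed
  have cpc: "continuous_on U (\<lambda>p. pc (real n * fst p))" "continuous_on U (\<lambda>p. qc (real n * fst p))"
    unfolding U_def using cont_half[OF n] by auto
  have cgU: "continuous_on U g" "continuous_on U (pdx g)" "continuous_on U (pdx (pdx g))" "continuous_on U (pdy (pdy g))"
    using cg by (auto intro: continuous_on_subset)
  have cF1: "continuous_on U F1" unfolding F1_def
    by (intro continuous_intros cV cpc cgU) (use U0 in auto)
  have cF2: "continuous_on U F2" unfolding F2_def
    by (intro continuous_intros cpc cgU) (use U0 in auto)
  have cG: "continuous_on U G" unfolding G_def
    by (intro continuous_intros cpc cgU) (use U0 in auto)
  have conv: "f \<in> borel_measurable (lborel \<Otimes>\<^sub>M lborel) \<longleftrightarrow> f \<in> borel_measurable borel" for f :: "real \<times> real \<Rightarrow> complex"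
    by (simp only: lborel_prod measurable_lborel2)
  have mg2[measurable]: "g \<in> borel_measurable (lborel \<Otimes>\<^sub>M lborel)" "pdx g \<in> borel_measurable (lborel \<Otimes>\<^sub>M lborel)"
    "pdx (pdx g) \<in> borel_measurable (lborel \<Otimes>\<^sub>M lborel)" "pdy (pdy g) \<in> borel_measurable (lborel \<Otimes>\<^sub>M lborel)"
    using mg by (simp_all only: conv)
  have "F1 \<in> borel_measurable (lborel \<Otimes>\<^sub>M lborel)" "F2 \<in> borel_measurable (lborel \<Otimes>\<^sub>M lborel)" "G \<in> borel_measurable (lborel \<Otimes>\<^sub>M lborel)"
    unfolding F1_def[abs_def] F2_def[abs_def] G_def[abs_def] by measurable
  then have mF[measurable]: "F1 \<in> borel_measurable borel" "F2 \<in> borel_measurable borel" "G \<in> borel_measurable borel"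
    by (simp_all only: conv)
  have vF: "F1 (x,y) = 0" "F2 (x,y) = 0" "G (x,y) = 0" if "x \<notin> {a'..b'}" for x y
    using out[OF that] van0 van1 van2 vany2 by (auto simp: F1_def F2_def G_def)

  have iK: "F1 integrable_on K" "F2 integrable_on K" "G integrable_on K"
    using cF1 cF2 cG KU unfolding K_def by (auto intro!: integrable_continuous intro: continuous_on_subset)
  have cK: "continuous_on K F1" "continuous_on K F2" "continuous_on K G"
    using cF1 cF2 cG KU by (auto intro: continuous_on_subset)
  have B1: "(LINT p:Omega n|lborel. F1 p + F2 p) = integral K (\<lambda>p. F1 p + F2 p)"
    unfolding K_def by (rule box_integral[OF a'1(1)]) (use cK vF in \<open>auto simp: K_def intro!: continuous_intros\<close>)
  have B2: "(LINT p:Omega n|lborel. G p) = integral K G"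
    unfolding K_def by (rule box_integral[OF a'1(1)]) (use cK vF in \<open>auto simp: K_def\<close>)
  have S1: "integral K (\<lambda>p. F1 p + F2 p) = integral K F1 + integral K F2"
    by (rule integral_add[OF iK(1) iK(2)])
  have Z2: "integral K F2 = 0"
  proof -
    have "integral K F2 = integral {a'..b'} (\<lambda>x. integral {0..2*pi} (\<lambda>y. F2 (x,y)))"
      unfolding K_def using integral_prod_continuous[OF cK(2)[unfolded K_def]] by (simp add: cbox_interval)
    also have "\<dots> = integral {a'..b'} (\<lambda>x. 0)"
    proof (rule integral_cong)
      fix x assume "x \<in> {a'..b'}"
      have "((\<lambda>y. pdy (pdy g) (x,y)) has_integral (pdy g (x, 2*pi) - pdy g (x, 0))) {0..2*pi}"
        by (rule fundamental_theorem_of_calculus) (auto intro!: has_vector_derivative_at_within pdy_deriv dy1)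
      moreover have "pdy g (x, 2*pi) = pdy g (x, 0)" using pdy_periodic[OF d0 per, of x 0] by simp
      ultimately have "((\<lambda>y. pdy (pdy g) (x,y)) has_integral 0) {0..2*pi}" by simp
      then have "((\<lambda>y. complex_of_real (x\<^sup>2) * pc (real n * x) / complex_of_real \<bar>x\<bar> * pdy (pdy g) (x,y)) has_integral
          complex_of_real (x\<^sup>2) * pc (real n * x) / complex_of_real \<bar>x\<bar> * 0) {0..2*pi}"
        by (rule has_integral_mult_right)
      then have "((\<lambda>y. F2 (x,y)) has_integral 0) {0..2*pi}"
        by (simp add: F2_def mult_ac)
      then show "integral {0..2*pi} (\<lambda>y. F2 (x,y)) = 0" by (rule integral_unique)
    qed
    finally show ?thesis by simp
  qed
  have Z3: "integral K (\<lambda>p. F1 p - G p) = 0"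
  proof -
    have cD: "continuous_on K (\<lambda>p. F1 p - G p)" using cK by (intro continuous_intros)
    have "integral K (\<lambda>p. F1 p - G p) = integral {a'..b'} (\<lambda>x. integral {0..2*pi} (\<lambda>y. F1 (x,y) - G (x,y)))"
      unfolding K_def using integral_prod_continuous[OF cD[unfolded K_def]] by (simp add: cbox_interval)
    also have "\<dots> = integral {0..2*pi} (\<lambda>y. integral {a'..b'} (\<lambda>x. F1 (x,y) - G (x,y)))"
      using integral_swap_continuous[of a' 0 b' "2*pi" "\<lambda>x y. F1 (x,y) - G (x,y)"] cD
      unfolding K_def by (simp add: cbox_interval)
    also have "\<dots> = integral {0..2*pi} (\<lambda>y. 0)"
    proof (rule integral_cong)
      fix y :: real
      define P where "P t = (pdx g (t,y) * pc (real n * t) - g (t,y) * (complex_of_real (real n) * pc1 (real n * t))) / complex_of_real t" for t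
      have "((\<lambda>x. F1 (x,y) - G (x,y)) has_integral (P b' - P a')) {a'..b'}"
      proof (rule fundamental_theorem_of_calculus[OF ab'])
        fix t assume t: "t \<in> {a'..b'}"
        have t0: "t \<noteq> 0" using pos[OF t] by simp
        have D: "(P has_vector_derivative
           ((pdx (pdx g) (t,y) - pdx g (t,y) / complex_of_real t + complex_of_real (Vpot n t) * g (t,y)) * pc (real n * t)
             - g (t,y) * (complex_of_real ((real n)^2) * pc2 (real n * t) - complex_of_real (real n) * pc1 (real n * t) / complex_of_real t
               + complex_of_real (Vpot n t) * pc (real n * t))) / complex_of_real t) (at t)"
          unfolding P_def
          by (rule P_deriv[where ph = "\<lambda>t. g (t,y)" and phd = "\<lambda>t. pdx g (t,y)" and ps = "\<lambda>t. pc (real n * t)"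
                 and psd = "\<lambda>t. complex_of_real (real n) * pc1 (real n * t)",
                 OF pdx_deriv[OF d0] pdx_deriv[OF d1] pc_deriv[OF gt[OF t]] pc1_deriv[OF gt[OF t]] t0])
        have oi: "complex_of_real ((real n)^2) * pc2 (real n * t) - complex_of_real (real n) * pc1 (real n * t) / complex_of_real t
               + complex_of_real (Vpot n t) * pc (real n * t) = complex_of_real ((real n)^2) * qc (real n * t)"
        proof -
          have e: "complex_of_real (1/t) * (complex_of_real (real n) * pc1 (real n * t)) = complex_of_real (real n) * pc1 (real n * t) / complex_of_real t"
            by (simp add: divide_inverse mult_ac)
          show ?thesis using ode_identity[OF n pos[OF t]] unfolding e .
        qed
        have "((pdx (pdx g) (t,y) - pdx g (t,y) / complex_of_real t + complex_of_real (Vpot n t) * g (t,y)) * pc (real n * t)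
             - g (t,y) * (complex_of_real ((real n)^2) * pc2 (real n * t) - complex_of_real (real n) * pc1 (real n * t) / complex_of_real t
               + complex_of_real (Vpot n t) * pc (real n * t))) / complex_of_real t = F1 (t,y) - G (t,y)"
        proof -
          have e: "complex_of_real (1 / t) * pdx g (t,y) = pdx g (t,y) / complex_of_real t"
            by (simp add: divide_inverse mult_ac)
          have ab: "\<bar>t\<bar> = t" using pos[OF t] by simp
          show ?thesis unfolding oi F1_def G_def fst_conv e ab by (rule diff_divide_distrib)
        qed
        with D show "(P has_vector_derivative F1 (t,y) - G (t,y)) (at t within {a'..b'})"
          by (simp add: has_vector_derivative_at_within)
      qed
      moreover have "P a' = 0" "P b' = 0" unfolding P_def using van0[OF outa] van1[OF outa] van0[OF outb] van1[OF outb] by auto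
      ultimately have "((\<lambda>x. F1 (x,y) - G (x,y)) has_integral 0) {a'..b'}" by simp
      then show "integral {a'..b'} (\<lambda>x. F1 (x,y) - G (x,y)) = 0" by (rule integral_unique)
    qed
    finally show ?thesis by simp
  qed
  have "integral K F1 = integral K G"
    using Z3 integral_diff[OF iK(1) iK(3)] by simp
  then show ?thesis unfolding LHS RHS B1 B2 S1 Z2 by simp
qed

definition NN :: "nat \<Rightarrow> (real \<times> real \<Rightarrow> complex) \<Rightarrow> ennreal" where
  "NN n a = (\<integral>\<^sup>+ p \<in> Omega n. ennreal ((cmod (a p))\<^sup>2 / \<bar>fst p\<bar>) \<partial>lborel)"

lemma conv_meas: "f \<in> borel_measurable (lborel \<Otimes>\<^sub>M lborel) \<longleftrightarrow> f \<in> borel_measurable (lborel :: (real \<times> real) measure)"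
  by (simp only: lborel_prod)

lemma Omega_sets: "Omega n \<in> sets (lborel \<Otimes>\<^sub>M lborel)"
  unfolding Omega_def by (rule pair_measureI) auto

lemma cs_bound:
  fixes a b :: "real \<times> real \<Rightarrow> complex"
  assumes ma: "a \<in> borel_measurable lborel" and mb: "b \<in> borel_measurable lborel"
  shows "(\<integral>\<^sup>+ p \<in> Omega n. ennreal (cmod (a p) * cmod (b p) / \<bar>fst p\<bar>) \<partial>lborel)^2 \<le> NN n a * NN n b"
proof -
  define f where "f p = ennreal (cmod (a p) / sqrt \<bar>fst p\<bar>) * indicator (Omega n) p" for p
  define g where "g p = ennreal (cmod (b p) / sqrt \<bar>fst p\<bar>) * indicator (Omega n) p" for p
  have ma2[measurable]: "a \<in> borel_measurable (lborel \<Otimes>\<^sub>M lborel)" and mb2[measurable]: "b \<in> borel_measurable (lborel \<Otimes>\<^sub>M lborel)"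
    using ma mb by (simp_all only: conv_meas)
  note [measurable] = Omega_sets
  have "f \<in> borel_measurable (lborel \<Otimes>\<^sub>M lborel)" "g \<in> borel_measurable (lborel \<Otimes>\<^sub>M lborel)"
    unfolding f_def[abs_def] g_def[abs_def] by measurable
  then have mf: "f \<in> borel_measurable lborel" and mg: "g \<in> borel_measurable lborel" by (simp_all only: conv_meas)
  have fg: "f p * g p = ennreal (cmod (a p) * cmod (b p) / \<bar>fst p\<bar>) * indicator (Omega n) p" for p
  proof (cases "p \<in> Omega n")
    case True
    have "ennreal (cmod (a p) / sqrt \<bar>fst p\<bar>) * ennreal (cmod (b p) / sqrt \<bar>fst p\<bar>)
        = ennreal (cmod (a p) / sqrt \<bar>fst p\<bar> * (cmod (b p) / sqrt \<bar>fst p\<bar>))"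
      by (rule ennreal_mult''[symmetric]) simp
    also have "cmod (a p) / sqrt \<bar>fst p\<bar> * (cmod (b p) / sqrt \<bar>fst p\<bar>) = cmod (a p) * cmod (b p) / \<bar>fst p\<bar>"
      by (simp add: divide_simps) 
    finally show ?thesis using True by (simp add: f_def g_def)
  qed (simp add: f_def g_def)
  have ff: "f p ^ 2 = ennreal ((cmod (a p))\<^sup>2 / \<bar>fst p\<bar>) * indicator (Omega n) p" for p
  proof (cases "p \<in> Omega n")
    case True
    have "ennreal (cmod (a p) / sqrt \<bar>fst p\<bar>) ^ 2 = ennreal ((cmod (a p) / sqrt \<bar>fst p\<bar>) ^ 2)"
      by (rule ennreal_power) simp
    also have "(cmod (a p) / sqrt \<bar>fst p\<bar>) ^ 2 = (cmod (a p))\<^sup>2 / \<bar>fst p\<bar>"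
      by (simp add: power_divide)
    finally show ?thesis using True by (simp add: f_def)
  qed (simp add: f_def)
  have gg: "g p ^ 2 = ennreal ((cmod (b p))\<^sup>2 / \<bar>fst p\<bar>) * indicator (Omega n) p" for p
  proof (cases "p \<in> Omega n")
    case True
    have "ennreal (cmod (b p) / sqrt \<bar>fst p\<bar>) ^ 2 = ennreal ((cmod (b p) / sqrt \<bar>fst p\<bar>) ^ 2)"
      by (rule ennreal_power) simp
    also have "(cmod (b p) / sqrt \<bar>fst p\<bar>) ^ 2 = (cmod (b p))\<^sup>2 / \<bar>fst p\<bar>"
      by (simp add: power_divide)
    finally show ?thesis using True by (simp add: g_def)
  qed (simp add: g_def)
  from Cauchy_Schwarz_nn_integral[OF mf mg] show ?thesis
    unfolding fg ff gg NN_def .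
qed

lemma inner_bound:
  fixes a b :: "real \<times> real \<Rightarrow> complex"
  assumes ma: "a \<in> borel_measurable lborel" and mb: "b \<in> borel_measurable lborel"
    and Na: "NN n a < \<infinity>" and Nb: "NN n b < \<infinity>"
  shows "set_integrable lborel (Omega n) (\<lambda>p. a p * cnj (b p) / complex_of_real \<bar>fst p\<bar>)"
    and "norm (LINT p:Omega n|lborel. a p * cnj (b p) / complex_of_real \<bar>fst p\<bar>) \<le> sqrt (enn2real (NN n a) * enn2real (NN n b))"
proof -
  define I where "I = (\<integral>\<^sup>+ p \<in> Omega n. ennreal (cmod (a p) * cmod (b p) / \<bar>fst p\<bar>) \<partial>lborel)"
  have cs: "I^2 \<le> NN n a * NN n b" unfolding I_def by (rule cs_bound[OF ma mb])
  have "NN n a * NN n b < \<infinity>" using Na Nb by (simp add: ennreal_mult_less_top)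
  then have "I^2 < \<infinity>" using cs by (rule le_less_trans[rotated])
  then have "I^2 \<noteq> top" by simp
  then have "I \<noteq> top" using power_eq_top_ennreal[of I 2] by auto
  then have Ifin: "I < \<infinity>" by (simp add: top.not_eq_extremum)
  have ma2[measurable]: "a \<in> borel_measurable (lborel \<Otimes>\<^sub>M lborel)" and mb2[measurable]: "b \<in> borel_measurable (lborel \<Otimes>\<^sub>M lborel)"
    using ma mb by (simp_all only: conv_meas)
  note [measurable] = Omega_sets
  have "(\<lambda>p. indicator (Omega n) p *\<^sub>R (a p * cnj (b p) / complex_of_real \<bar>fst p\<bar>)) \<in> borel_measurable (lborel \<Otimes>\<^sub>M lborel)"
    by measurable
  then have mi: "(\<lambda>p. indicator (Omega n) p *\<^sub>R (a p * cnj (b p) / complex_of_real \<bar>fst p\<bar>)) \<in> borel_measurable lborel"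
    by (simp only: conv_meas)
  have eqI: "(\<integral>\<^sup>+ p. ennreal (norm (indicator (Omega n) p *\<^sub>R (a p * cnj (b p) / complex_of_real \<bar>fst p\<bar>))) \<partial>lborel) = I"
    unfolding I_def by (intro nn_integral_cong) (auto split: split_indicator simp: norm_mult norm_divide)
  show int: "set_integrable lborel (Omega n) (\<lambda>p. a p * cnj (b p) / complex_of_real \<bar>fst p\<bar>)"
    unfolding set_integrable_def integrable_iff_bounded using mi eqI Ifin by simp
  have "ennreal (norm (LINT p:Omega n|lborel. a p * cnj (b p) / complex_of_real \<bar>fst p\<bar>)) \<le> I"
    unfolding set_lebesgue_integral_def eqI[symmetric]
    by (rule integral_norm_bound_ennreal) (use int in \<open>simp add: set_integrable_def\<close>)
  define L where "L = norm (LINT p:Omega n|lborel. a p * cnj (b p) / complex_of_real \<bar>fst p\<bar>)"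
  have "ennreal L \<le> I" unfolding L_def by fact
  then have "ennreal L ^ 2 \<le> I ^ 2" by (rule power_mono) simp
  also have "\<dots> \<le> NN n a * NN n b" by (rule cs)
  also have "\<dots> = ennreal (enn2real (NN n a) * enn2real (NN n b))"
    using Na Nb by (simp add: ennreal_mult'' ennreal_enn2real_if less_top)
  finally have "ennreal (L^2) \<le> ennreal (enn2real (NN n a) * enn2real (NN n b))"
    by (simp add: ennreal_power L_def)
  then have "L^2 \<le> enn2real (NN n a) * enn2real (NN n b)"
    by (subst (asm) ennreal_le_iff) auto
  then have "sqrt (L^2) \<le> sqrt (enn2real (NN n a) * enn2real (NN n b))"
    by (rule real_sqrt_le_mono)
  then show "norm (LINT p:Omega n|lborel. a p * cnj (b p) / complex_of_real \<bar>fst p\<bar>) \<le> sqrt (enn2real (NN n a) * enn2real (NN n b))"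
    by (simp add: L_def)
qed

lemma inner_limit:
  assumes u: "u \<in> L2 n" and v: "v \<in> L2 n" and hm: "\<And>k. h k \<in> borel_measurable lborel"
    and lim: "(\<lambda>k. l2_dist2 n (h k) u) \<longlonglongrightarrow> 0"
  shows "(\<lambda>k. l2_inner n (h k) v) \<longlonglongrightarrow> l2_inner n u v"
proof -
  have mu: "u \<in> borel_measurable lborel" and Nu: "NN n u < \<infinity>" using u unfolding L2_def NN_def by auto
  have mv: "v \<in> borel_measurable lborel" and Nv: "NN n v < \<infinity>" using v unfolding L2_def NN_def by auto
  have ev: "eventually (\<lambda>k. l2_dist2 n (h k) u < 1) sequentially"
    using lim by (rule order_tendstoD) simp
  have bound: "eventually (\<lambda>k. norm (l2_inner n (h k) v - l2_inner n u v) \<le> sqrt (enn2real (l2_dist2 n (h k) u) * enn2real (NN n v))) sequentially"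
    using ev
  proof eventually_elim
    case (elim k)
    define d where "d p = h k p - u p" for p
    have md: "d \<in> borel_measurable lborel" unfolding d_def[abs_def] using hm[of k] mu by measurable
    have Nd: "NN n d = l2_dist2 n (h k) u" unfolding NN_def l2_dist2_def d_def ..
    have Ndf: "NN n d < \<infinity>" using elim Nd by (simp add: less_le_trans[of _ 1])
    note b1 = inner_bound[OF md mv Ndf Nv]
    note b2 = inner_bound[OF mu mv Nu Nv]
    have "l2_inner n (h k) v = (LINT p:Omega n|lborel. d p * cnj (v p) / complex_of_real \<bar>fst p\<bar> + u p * cnj (v p) / complex_of_real \<bar>fst p\<bar>)"
    proof -
      have "h k p * cnj (v p) / complex_of_real \<bar>fst p\<bar> = d p * cnj (v p) / complex_of_real \<bar>fst p\<bar> + u p * cnj (v p) / complex_of_real \<bar>fst p\<bar>" for p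
        unfolding add_divide_distrib[symmetric] d_def by (simp add: algebra_simps)
      then show ?thesis unfolding l2_inner_def by simp
    qed
    also have "\<dots> = (LINT p:Omega n|lborel. d p * cnj (v p) / complex_of_real \<bar>fst p\<bar>) + l2_inner n u v"
      unfolding l2_inner_def by (rule set_integral_add(2)[OF b1(1) b2(1)])
    finally show ?case using b1(2) Nd by simp
  qed
  have "(\<lambda>k. enn2real (l2_dist2 n (h k) u)) \<longlonglongrightarrow> 0"
    using tendsto_enn2real[of "\<lambda>k. l2_dist2 n (h k) u" 0 sequentially] lim by simp
  then have "(\<lambda>k. sqrt (enn2real (l2_dist2 n (h k) u) * enn2real (NN n v))) \<longlonglongrightarrow> 0"
    using tendsto_real_sqrt[OF tendsto_mult_left_zero] by fastforce
  from Lim_null_comparison[OF bound this] show ?thesis by (simp add: LIM_zero_iff)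
qed

lemma meas_test:
  assumes "test_fun n g"
  shows "g \<in> borel_measurable lborel" "Dex n g \<in> borel_measurable lborel"
proof -
  have sm: "smooth2 g" using assms unfolding test_fun_def by simp
  have mg: "g \<in> borel_measurable borel" "pdx g \<in> borel_measurable borel" "pdx (pdx g) \<in> borel_measurable borel"
     "pdy (pdy g) \<in> borel_measurable borel"
    using meas_smooth[OF sm, of "[]"] meas_smooth[OF sm, of "[True]"] meas_smooth[OF sm, of "[True,True]"]
      meas_smooth[OF sm, of "[False,False]"] by simp_all
  have conv: "f \<in> borel_measurable (lborel \<Otimes>\<^sub>M lborel) \<longleftrightarrow> f \<in> borel_measurable borel" for f :: "real \<times> real \<Rightarrow> complex"
    by (simp only: lborel_prod measurable_lborel2)
  have mg2[measurable]: "g \<in> borel_measurable (lborel \<Otimes>\<^sub>M lborel)" "pdx g \<in> borel_measurable (lborel \<Otimes>\<^sub>M lborel)"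
    "pdx (pdx g) \<in> borel_measurable (lborel \<Otimes>\<^sub>M lborel)" "pdy (pdy g) \<in> borel_measurable (lborel \<Otimes>\<^sub>M lborel)"
    using mg by (simp_all only: conv)
  show "g \<in> borel_measurable lborel" using mg by simp
  have "Dex n g \<in> borel_measurable (lborel \<Otimes>\<^sub>M lborel)"
    unfolding Dex_eq by measurable
  then show "Dex n g \<in> borel_measurable lborel" by (simp only: conv_meas)
qed

lemma adj_mem:
  assumes n: "n \<ge> 1"
  shows "(vv n, ww n) \<in> op_adjoint n (op_closure n (Dex_graph n))"
  unfolding op_adjoint_def
proof (clarsimp simp: vv_L2[OF n] ww_L2[OF n])
  fix u f assume "(u, f) \<in> op_closure n (Dex_graph n)"
  then obtain s where u: "u \<in> L2 n" and f: "f \<in> L2 n" and sG: "\<And>k. s k \<in> Dex_graph n"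
    and l1: "(\<lambda>k. l2_dist2 n (fst (s k)) u) \<longlonglongrightarrow> 0" and l2: "(\<lambda>k. l2_dist2 n (snd (s k)) f) \<longlonglongrightarrow> 0"
    unfolding op_closure_def by blast
  have tk: "test_fun n (fst (s k))" and sk: "snd (s k) = Dex n (fst (s k))" for k
    using sG[of k] unfolding Dex_graph_def by auto
  have A: "(\<lambda>k. l2_inner n (snd (s k)) (vv n)) \<longlonglongrightarrow> l2_inner n f (vv n)"
    by (rule inner_limit[OF f vv_L2[OF n] _ l2]) (use meas_test(2)[OF tk] in \<open>simp add: sk\<close>)
  have B: "(\<lambda>k. l2_inner n (fst (s k)) (ww n)) \<longlonglongrightarrow> l2_inner n u (ww n)"
    by (rule inner_limit[OF u ww_L2[OF n] _ l1]) (use meas_test(1)[OF tk] in simp)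
  have "(\<lambda>k. l2_inner n (snd (s k)) (vv n)) = (\<lambda>k. l2_inner n (fst (s k)) (ww n))"
    using test_identity[OF n tk] sk by auto
  with A B show "l2_inner n f (vv n) = l2_inner n u (ww n)"
    using LIMSEQ_unique by metis
qed

lemma l2_inner_cnj: "l2_inner n v w = cnj (l2_inner n w v)"
proof -
  have "l2_inner n v w = (LINT p:Omega n|lborel. cnj (w p * cnj (v p) / complex_of_real \<bar>fst p\<bar>))"
    unfolding l2_inner_def by (simp add: mult.commute)
  also have "\<dots> = cnj (l2_inner n w v)"
  proof -
    have e: "(\<lambda>p. indicator (Omega n) p *\<^sub>R cnj (w p * cnj (v p) / complex_of_real \<bar>fst p\<bar>))
        = (\<lambda>p. cnj (indicator (Omega n) p *\<^sub>R (w p * cnj (v p) / complex_of_real \<bar>fst p\<bar>)))"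
      by (auto split: split_indicator)
    show ?thesis unfolding l2_inner_def set_lebesgue_integral_def e by (rule Bochner_Integration.integral_cnj)
  qed
  finally show ?thesis .
qed

theorem proposition5:
  fixes n :: nat
  assumes "n \<ge> 1"
  shows "\<not> essentially_self_adjoint n (Dex_graph n)"
proof
  assume "essentially_self_adjoint n (Dex_graph n)"
  then have eq: "op_adjoint n (op_closure n (Dex_graph n)) = op_closure n (Dex_graph n)"
    unfolding essentially_self_adjoint_def self_adjoint_op_def .
  have adj: "(vv n, ww n) \<in> op_adjoint n (op_closure n (Dex_graph n))" by (rule adj_mem[OF assms])
  then have "(vv n, ww n) \<in> op_closure n (Dex_graph n)" using eq by simp
  with adj have "l2_inner n (ww n) (vv n) = l2_inner n (vv n) (ww n)"
    unfolding op_adjoint_def by blast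
  also have "\<dots> = cnj (l2_inner n (ww n) (vv n))" by (rule l2_inner_cnj)
  finally have "Im (l2_inner n (ww n) (vv n)) = - Im (l2_inner n (ww n) (vv n))"
    by (metis complex_cnj_cancel_iff complex_cnj_complex_of_real complex_is_Real_iff complex.sel(2) cnj.sel(2))
  then have "Im (l2_inner n (ww n) (vv n)) = 0" by simp
  with inner_ww_vv[OF assms] show False by simp
qed

end
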